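(* Let $f\ge 1$ and $k\ge 2$ be integers, let there be $n=kf+1$ validators, each maintaining a local DAG as described in the context (DAG-Rider setting). Let $p_i$ be a correct validator that completes wave $w$, i.e. $DAG_i[\mathit{round}(w,4)]$ contains at least $(k-1)f+1$ vertices. Then there exist $V\subseteq DAG_i[\mathit{round}(w,1)]$ and $U\subseteq DAG_i[\mathit{round}(w,4)]$ with $|V|\ge (k-1)f+1$ and $|U|\ge (k-1)f+1$ such that for every $v\in V$ and every $u\in U$ there is a path from $u$ to $v$.
   Context: Setting: $n=kf+1$ validators $p_1,\dots,p_n$, of which at most $f$ are Byzantine and the rest are correct (honest). All validators' local DAGs are subsets of one common set of vertices. Each vertex has a round number $r\ge 1$ and a source validator; for each validator and each round there is at most one vertex (no equivocation), so any two local DAGs that contain the vertex of a given validator for a given round contain the identical vertex, with identical edges. Every vertex of round $r\ge 2$ has edges to exactly $(k-1)f+1$ vertices of round $r-1$, all with distinct sources. Each validator $p_i$ has a local DAG $DAG_i$, a set of vertices closed under edges (if $u\in DAG_i$ then every vertex $u$ has an edge to is in $DAG_i$). $DAG_i[r]$ denotes the set of round-$r$ vertices of $DAG_i$. $\mathit{path}(u,v)$ ("a path from $u$ to $v$") means there is a sequence of contiguous edges leading from $u$ to $v$. Rounds are grouped into waves of 4 rounds: $\mathit{round}(w,j)=4(w-1)+j$ for $j=1,2,3,4$ and waves $w\ge 1$. A validator completes wave $w$ once its local DAG contains at least $(k-1)f+1$ vertices of $\mathit{round}(w,4)$. *)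

theory Defs
  imports Main
begin

definition wround :: "nat \<Rightarrow> nat \<Rightarrow> nat" where
  "wround w j = 4 * (w - 1) + j"

definition layer :: "('v \<Rightarrow> nat) \<Rightarrow> 'v set \<Rightarrow> nat \<Rightarrow> 'v set" where
  "layer rnd D r = {v \<in> D. rnd v = r}"

text \<open>path u v: a nonempty sequence of contiguous edges from u to v, E being the
  edge relation ((x,y) \<in> E means x has an edge to y).\<close>
definition path :: "('v \<times> 'v) set \<Rightarrow> 'v \<Rightarrow> 'v \<Rightarrow> bool" where
  "path E u v \<longleftrightarrow> (u, v) \<in> E\<^sup>+"

end

theory Submission
  imports Defs
begin

theorem lemma2:
  fixes n f k :: nat
    and Vert :: "'v set"            \<comment> \<open>common set of all vertices\<close>
    and rnd :: "'v \<Rightarrow> nat"         \<comment> \<open>round number\<close>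
    and src :: "'v \<Rightarrow> nat"         \<comment> \<open>source validator, in {1..n}\<close>
    and E :: "('v \<times> 'v) set"       \<comment> \<open>edges\<close>
    and DAG :: "nat \<Rightarrow> 'v set"     \<comment> \<open>local DAG of validator p_j\<close>
    and Correct :: "nat set"        \<comment> \<open>indices of correct validators\<close>
    and i w :: nat
  assumes f_ge: "f \<ge> 1" and k_ge: "k \<ge> 2" and n_def: "n = k * f + 1"
    and Correct_sub: "Correct \<subseteq> {1..n}"
    and byz: "card ({1..n} - Correct) \<le> f"
    and rnd_pos: "\<forall>v\<in>Vert. rnd v \<ge> 1"
    and src_range: "\<forall>v\<in>Vert. src v \<in> {1..n}"
    and no_equiv: "\<forall>u\<in>Vert. \<forall>v\<in>Vert. rnd u = rnd v \<and> src u = src v \<longrightarrow> u = v"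
    and E_sub: "E \<subseteq> Vert \<times> Vert"
    and edges: "\<forall>v\<in>Vert. rnd v \<ge> 2 \<longrightarrow>
                  card {u \<in> E `` {v}. rnd u = rnd v - 1} = (k - 1) * f + 1
                \<and> inj_on src {u \<in> E `` {v}. rnd u = rnd v - 1}"
    and DAG_sub: "\<forall>j\<in>{1..n}. DAG j \<subseteq> Vert"
    and DAG_closed: "\<forall>j\<in>{1..n}. \<forall>u\<in>DAG j. E `` {u} \<subseteq> DAG j"
    and i_correct: "i \<in> Correct"
    and w_ge: "w \<ge> 1"
    and completes: "card (layer rnd (DAG i) (wround w 4)) \<ge> (k - 1) * f + 1"
  shows "\<exists>V U. V \<subseteq> layer rnd (DAG i) (wround w 1) \<and> U \<subseteq> layer rnd (DAG i) (wround w 4)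
           \<and> finite V \<and> finite U
           \<and> card V \<ge> (k - 1) * f + 1 \<and> card U \<ge> (k - 1) * f + 1
           \<and> (\<forall>v\<in>V. \<forall>u\<in>U. path E u v)"
proof -
  define m where "m = (k - 1) * f + 1"
  define D where "D = DAG i"
  define Par where "Par v = {u \<in> E `` {v}. rnd u = rnd v - 1}" for v
  define L where "L r = layer rnd D r" for r
  obtain j where kj: "k = Suc (Suc j)" using k_ge by (metis add_2_eq_Suc le_Suc_ex)
  have nm: "n = m + f" unfolding n_def m_def kj by simp
  have mf: "m > f" using f_ge unfolding m_def kj by simp
  have iin: "i \<in> {1..n}" using i_correct Correct_sub by blast
  have Dsub: "D \<subseteq> Vert" using DAG_sub iin D_def by blast
  have Dcl: "\<And>u. u \<in> D \<Longrightarrow> E `` {u} \<subseteq> D" using DAG_closed iin D_def by blast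
  have Lfin: "finite (L r) \<and> card (L r) \<le> n" for r
  proof -
    have inj: "inj_on src (L r)" using no_equiv Dsub unfolding inj_on_def L_def layer_def by blast
    have sub: "src ` L r \<subseteq> {1..n}" using src_range Dsub unfolding L_def layer_def by blast
    have fin: "finite (L r)" using inj sub finite_imageD[OF finite_subset[OF sub]] by blast
    have "card (L r) = card (src ` L r)" using card_image[OF inj] by simp
    also have "\<dots> \<le> card {1..n}" using card_mono[OF _ sub] by simp
    finally show ?thesis using fin by simp
  qed
  have Par_prop: "Par v \<subseteq> L (r - 1) \<and> card (Par v) = m"
    if "v \<in> L r" "r \<ge> 2" for v r
  proof -
    have "v \<in> D" "rnd v = r" using that unfolding L_def layer_def by auto
    then have "v \<in> Vert" using Dsub by auto
    then have "card (Par v) = m" using edges \<open>rnd v = r\<close> that(2) unfolding Par_def m_def by auto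
    moreover have "Par v \<subseteq> L (r - 1)" using Dcl[OF \<open>v \<in> D\<close>] \<open>rnd v = r\<close>
      unfolding Par_def L_def layer_def by auto
    ultimately show ?thesis by simp
  qed
  define r1 where "r1 = wround w 1"
  have r4: "wround w 4 = r1 + 3" unfolding r1_def wround_def by simp
  have r1ge: "r1 \<ge> 1" unfolding r1_def wround_def by simp
  define U where "U = L (r1 + 3)"
  define Y where "Y = L (r1 + 2)"
  define Z where "Z = L (r1 + 1)"
  have Ucard: "card U \<ge> m" using completes r4 unfolding U_def L_def D_def m_def by simp
  have Ufin: "finite U" "finite Y" "finite Z" unfolding U_def Y_def Z_def using Lfin by auto
  have cY: "card Y \<le> n" "card Z \<le> n" unfolding Y_def Z_def using Lfin by auto
  have PU: "Par u \<subseteq> Y \<and> card (Par u) = m" if "u \<in> U" for u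
    using Par_prop[of u "r1 + 3"] that unfolding U_def Y_def by simp
  have PY: "Par x \<subseteq> Z \<and> card (Par x) = m" if "x \<in> Y" for x
    using Par_prop[of x "r1 + 2"] that r1ge unfolding Z_def Y_def by simp
  have PZ: "Par z \<subseteq> L r1 \<and> card (Par z) = m" if "z \<in> Z" for z
    using Par_prop[of z "r1 + 1"] that r1ge unfolding Z_def by simp
  have "U \<noteq> {}" using Ucard m_def by auto
  then obtain u0 where "u0 \<in> U" by blast
  have Ym: "card Y \<ge> m" using PU[OF \<open>u0 \<in> U\<close>] card_mono[OF Ufin(2)] by metis
  define C where "C z = {x \<in> Y. z \<in> Par x}" for z
  have dc: "(\<Sum>z\<in>Z. card (C z)) = (\<Sum>x\<in>Y. card (Par x))"
  proof -
    have "(\<Sum>z\<in>Z. card (C z)) = (\<Sum>z\<in>Z. \<Sum>x\<in>Y. if z \<in> Par x then 1 else 0)"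
      unfolding C_def using Ufin by (simp add: sum.If_cases Int_def)
    also have "\<dots> = (\<Sum>x\<in>Y. \<Sum>z\<in>Z. if z \<in> Par x then 1 else 0)" by (rule sum.swap)
    also have "\<dots> = (\<Sum>x\<in>Y. card (Par x))"
    proof (rule sum.cong[OF refl])
      fix x assume "x \<in> Y"
      then have "Par x \<subseteq> Z" using PY by blast
      then have "Z \<inter> Par x = Par x" by blast
      then show "(\<Sum>z\<in>Z. if z \<in> Par x then 1 else 0) = card (Par x)"
        using Ufin by (simp add: sum.If_cases)
    qed
    finally show ?thesis .
  qed
  also have "\<dots> = card Y * m" using PY by simp
  finally have dc2: "(\<Sum>z\<in>Z. card (C z)) = card Y * m" .
  have "\<exists>z\<in>Z. card (C z) + m > card Y"
  proof (rule ccontr)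
    assume "\<not> ?thesis"
    then have "\<forall>z\<in>Z. card (C z) \<le> card Y - m" by auto
    then have "(\<Sum>z\<in>Z. card (C z)) \<le> card Z * (card Y - m)"
      using sum_bounded_above[of Z "\<lambda>z. card (C z)" "card Y - m"] by simp
    also have "\<dots> \<le> n * (card Y - m)" using cY by simp
    finally have "card Y * m \<le> n * (card Y - m)" using dc2 by simp
    then have "card Y * m \<le> (m + f) * (card Y - m)" using nm by simp
    moreover obtain t where t: "card Y = m + t" using Ym by (metis le_iff_add)
    ultimately have "(m + t) * m \<le> (m + f) * t" by simp
    then have "m * m + t * m \<le> m * t + f * t" by (simp add: algebra_simps)
    then have "m * m \<le> f * t" by simp
    moreover have "t \<le> f" using t cY nm by simp
    ultimately have "m * m \<le> f * f" using mult_le_mono2 le_trans by blast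
    then show False using mf by (meson mult_strict_mono' not_le zero_le)
  qed
  then obtain z where z: "z \<in> Z" "card (C z) + m > card Y" by blast
  have reach: "\<exists>x. x \<in> Par u \<and> z \<in> Par x" if "u \<in> U" for u
  proof (rule ccontr)
    assume "\<not> ?thesis"
    then have disj: "Par u \<inter> C z = {}" unfolding C_def by blast
    have "C z \<subseteq> Y" unfolding C_def by blast
    then have "Par u \<union> C z \<subseteq> Y" using PU[OF that] by blast
    then have "card (Par u \<union> C z) \<le> card Y" using card_mono Ufin by blast
    moreover have "card (Par u \<union> C z) = card (Par u) + card (C z)"
      using card_Un_disjoint[OF _ _ disj] PU[OF that] \<open>C z \<subseteq> Y\<close> Ufin
      by (meson finite_subset)
    ultimately show False using z PU[OF that] by simp
  qed
  show ?thesis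
  proof (intro exI conjI)
    show "Par z \<subseteq> layer rnd (DAG i) (wround w 1)" using PZ[OF z(1)] unfolding L_def D_def r1_def by simp
    show "U \<subseteq> layer rnd (DAG i) (wround w 4)" unfolding U_def L_def D_def r4 by simp
    show "finite (Par z)" using PZ[OF z(1)] Lfin finite_subset by blast
    show "finite U" by fact
    show "(k - 1) * f + 1 \<le> card (Par z)" using PZ[OF z(1)] m_def by simp
    show "(k - 1) * f + 1 \<le> card U" using Ucard m_def by simp
    show "\<forall>v\<in>Par z. \<forall>u\<in>U. path E u v"
    proof (intro ballI)
      fix v u assume v: "v \<in> Par z" and u: "u \<in> U"
      obtain x where x: "x \<in> Par u" "z \<in> Par x" using reach[OF u] by blast
      have "(u, x) \<in> E" "(x, z) \<in> E" "(z, v) \<in> E" using x v unfolding Par_def by auto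
      then show "path E u v" unfolding path_def by (meson trancl.simps)
    qed
  qed
qed

end
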